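(* Assume (A1)–(A4) and $\eta_x,\eta_z>0$ (see context). Then the iterates of the Jacobi scheme satisfy, for all $k\ge1$, $$\Phi^{k-1}\ge\Phi^k\ge\hat\Phi.$$
   Context: Let $T\ge1$, $[T]=\{1,\dots,T\}$; for $t\in[T]$: $X_t\subseteq\mathbb{R}^{n_t}$, $f_t:\mathbb{R}^{n_t}\to\mathbb{R}$, $A_t\in\mathbb{R}^{m\times n_t}$; $b\in\mathbb{R}^m$; $X=\prod_tX_t$, $A=[A_1\cdots A_T]$, $Ax=\sum_tA_tx_t$, $A_{\neq t}x_{\neq t}=\sum_{s\neq t}A_sx_s$; $\|w\|_M=\sqrt{w^\top Mw}$. Assumptions: (A1) $X_t$ nonempty compact; (A2) $f_t$ is $C^2$; (A3) $A$ full row rank; (A4) $\{x\in X:Ax=b\}\neq\emptyset$. Parameters $\rho,\theta,\tau_x,\tau_z>0$ with $\eta_x:=\frac{\tau_x}{4}-\frac{(T-1)\rho}{2}>0$, $\eta_z:=\frac{\tau_z}{4}-\frac{2(\theta+\tau_z)^2}{\rho}>0$. $\mathcal{L}(x,z,\lambda)=\sum_tf_t(x_t)+\frac{\theta}{2}\|z\|^2+\lambda^\top(Ax+z-b)+\frac{\rho}{2}\|Ax+z-b\|^2$. Jacobi scheme: given $x^0\in X$, $z^0,\lambda^0\in\mathbb{R}^m$, for $k\ge1$: (i) for each $t$, $x_t^k$ is a local minimizer, computed by a solver warm-started at $x_t^{k-1}$ (so that its subproblem objective does not exceed that of $x_t^{k-1}$), of $\min_{x_t\in X_t}f_t(x_t)+(\lambda^{k-1})^\top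 A_tx_t+\frac{\rho}{2}\|A_tx_t+A_{\neq t}x^{k-1}_{\neq t}+z^{k-1}-b\|^2+\frac{\tau_x}{2}\|x_t-x_t^{k-1}\|^2_{A_t^\top A_t}$; (ii) $z^k=(\tau_zz^{k-1}-\rho(Ax^k-b)-\lambda^{k-1})/(\tau_z+\rho+\theta)$; (iii) $\lambda^k=\lambda^{k-1}+\rho(Ax^k+z^k-b)$. $\Phi(x,z,\lambda,\hat x,\hat z)=\mathcal{L}(x,z,\lambda)+\frac{\tau_z}{4}\|z-\hat z\|^2+\sum_t\frac{\tau_x}{4}\|x_t-\hat x_t\|^2_{A_t^\top A_t}$; $\Phi^k=\Phi(x^k,z^k,\lambda^k,x^{k-1},z^{k-1})$ for $k\ge1$; $\Delta z^0=-\tau_z^{-1}(\lambda^0+\theta z^0)$, $\Phi^0=\mathcal{L}(x^0,z^0,\lambda^0)+\frac{\tau_z}{4}\|\Delta z^0\|^2$; $\hat\Phi=\min_{x\in X}\sum_tf_t(x_t)$. *)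

theory Defs
  imports "HOL-Analysis.Analysis"
begin

text \<open>A vector of R^d is represented by a function v :: nat \<Rightarrow> real whose
coordinates 0..d-1 are the meaningful ones; the carrier of R^d is the set Rn d of such
functions vanishing at all indices \<ge> d. Vectors of R^m (z, lambda, b) are functions
nat \<Rightarrow> real of which only coordinates < m are ever used. Blocks are indexed by
t \<in> {1..T}. The matrix A_t is A t :: nat \<Rightarrow> nat \<Rightarrow> real, entry (i,j) = A t i j,
i < m, j < n t. Topology on nat \<Rightarrow> real is the product topology, which on Rn d
coincides with the Euclidean topology of R^d.\<close>

definition Rn :: "nat \<Rightarrow> (nat \<Rightarrow> real) set" where
  "Rn d = {v. \<forall>i\<ge>d. v i = 0}"

definition sqn :: "nat \<Rightarrow> (nat \<Rightarrow> real) \<Rightarrow> real" where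
  "sqn d w = (\<Sum>i<d. (w i)^2)"

definition inr :: "nat \<Rightarrow> (nat \<Rightarrow> real) \<Rightarrow> (nat \<Rightarrow> real) \<Rightarrow> real" where
  "inr d u w = (\<Sum>i<d. u i * w i)"

definition mv :: "nat \<Rightarrow> (nat \<Rightarrow> nat \<Rightarrow> real) \<Rightarrow> (nat \<Rightarrow> real) \<Rightarrow> (nat \<Rightarrow> real)" where
  "mv d M v = (\<lambda>i. \<Sum>j<d. M i j * v j)"

definition Ax :: "nat \<Rightarrow> (nat \<Rightarrow> nat) \<Rightarrow> (nat \<Rightarrow> nat \<Rightarrow> nat \<Rightarrow> real) \<Rightarrow> (nat \<Rightarrow> nat \<Rightarrow> real) \<Rightarrow> (nat \<Rightarrow> real)" where
  "Ax T n A x = (\<lambda>i. \<Sum>t\<in>{1..T}. mv (n t) (A t) (x t) i)"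

definition Ax_ne :: "nat \<Rightarrow> (nat \<Rightarrow> nat) \<Rightarrow> (nat \<Rightarrow> nat \<Rightarrow> nat \<Rightarrow> real) \<Rightarrow> nat \<Rightarrow> (nat \<Rightarrow> nat \<Rightarrow> real) \<Rightarrow> (nat \<Rightarrow> real)" where
  "Ax_ne T n A t x = (\<lambda>i. \<Sum>s\<in>{1..T} - {t}. mv (n s) (A s) (x s) i)"

definition C2 :: "nat \<Rightarrow> ((nat \<Rightarrow> real) \<Rightarrow> real) \<Rightarrow> bool" where
  "C2 d f \<longleftrightarrow> (\<exists>g h.
     (\<forall>v\<in>Rn d. \<forall>i<d. ((\<lambda>s. f (v(i := v i + s))) has_real_derivative g i v) (at 0)) \<and>
     (\<forall>v\<in>Rn d. \<forall>i<d. \<forall>j<d. ((\<lambda>s. g i (v(j := v j + s))) has_real_derivative h i j v) (at 0)) \<and>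
     continuous_on (Rn d) f \<and>
     (\<forall>i<d. continuous_on (Rn d) (g i)) \<and>
     (\<forall>i<d. \<forall>j<d. continuous_on (Rn d) (h i j)))"

definition local_min_on :: "nat \<Rightarrow> (nat \<Rightarrow> real) set \<Rightarrow> ((nat \<Rightarrow> real) \<Rightarrow> real) \<Rightarrow> (nat \<Rightarrow> real) \<Rightarrow> bool" where
  "local_min_on d S g v \<longleftrightarrow> v \<in> S \<and>
     (\<exists>e>0. \<forall>y\<in>S. sqrt (sqn d (\<lambda>i. y i - v i)) < e \<longrightarrow> g v \<le> g y)"

definition full_row_rank :: "nat \<Rightarrow> nat \<Rightarrow> (nat \<Rightarrow> nat) \<Rightarrow> (nat \<Rightarrow> nat \<Rightarrow> nat \<Rightarrow> real) \<Rightarrow> bool" where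
  "full_row_rank T m n A \<longleftrightarrow>
     (\<forall>y::nat \<Rightarrow> real. (\<forall>t\<in>{1..T}. \<forall>j<n t. (\<Sum>i<m. y i * A t i j) = 0) \<longrightarrow> (\<forall>i<m. y i = 0))"

definition AL :: "nat \<Rightarrow> nat \<Rightarrow> (nat \<Rightarrow> nat) \<Rightarrow> (nat \<Rightarrow> (nat \<Rightarrow> real) \<Rightarrow> real) \<Rightarrow>
    (nat \<Rightarrow> nat \<Rightarrow> nat \<Rightarrow> real) \<Rightarrow> (nat \<Rightarrow> real) \<Rightarrow> real \<Rightarrow> real \<Rightarrow>
    (nat \<Rightarrow> nat \<Rightarrow> real) \<Rightarrow> (nat \<Rightarrow> real) \<Rightarrow> (nat \<Rightarrow> real) \<Rightarrow> real" where
  "AL T m n f A b rho theta x z lam =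
     (let r = (\<lambda>i. Ax T n A x i + z i - b i) in
      (\<Sum>t\<in>{1..T}. f t (x t)) + theta / 2 * sqn m z + inr m lam r + rho / 2 * sqn m r)"

definition Phi :: "nat \<Rightarrow> nat \<Rightarrow> (nat \<Rightarrow> nat) \<Rightarrow> (nat \<Rightarrow> (nat \<Rightarrow> real) \<Rightarrow> real) \<Rightarrow>
    (nat \<Rightarrow> nat \<Rightarrow> nat \<Rightarrow> real) \<Rightarrow> (nat \<Rightarrow> real) \<Rightarrow> real \<Rightarrow> real \<Rightarrow> real \<Rightarrow> real \<Rightarrow>
    (nat \<Rightarrow> nat \<Rightarrow> real) \<Rightarrow> (nat \<Rightarrow> real) \<Rightarrow> (nat \<Rightarrow> real) \<Rightarrow>
    (nat \<Rightarrow> nat \<Rightarrow> real) \<Rightarrow> (nat \<Rightarrow> real) \<Rightarrow> real" where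
  "Phi T m n f A b rho theta taux tauz x z lam xh zh =
     AL T m n f A b rho theta x z lam + tauz / 4 * sqn m (\<lambda>i. z i - zh i)
     + (\<Sum>t\<in>{1..T}. taux / 4 * sqn m (mv (n t) (A t) (\<lambda>j. x t j - xh t j)))"

definition Phi0 :: "nat \<Rightarrow> nat \<Rightarrow> (nat \<Rightarrow> nat) \<Rightarrow> (nat \<Rightarrow> (nat \<Rightarrow> real) \<Rightarrow> real) \<Rightarrow>
    (nat \<Rightarrow> nat \<Rightarrow> nat \<Rightarrow> real) \<Rightarrow> (nat \<Rightarrow> real) \<Rightarrow> real \<Rightarrow> real \<Rightarrow> real \<Rightarrow>
    (nat \<Rightarrow> nat \<Rightarrow> real) \<Rightarrow> (nat \<Rightarrow> real) \<Rightarrow> (nat \<Rightarrow> real) \<Rightarrow> real" where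
  "Phi0 T m n f A b rho theta tauz x0 z0 lam0 =
     AL T m n f A b rho theta x0 z0 lam0
     + tauz / 4 * sqn m (\<lambda>i. - (lam0 i + theta * z0 i) / tauz)"

definition Phi_seq :: "nat \<Rightarrow> nat \<Rightarrow> (nat \<Rightarrow> nat) \<Rightarrow> (nat \<Rightarrow> (nat \<Rightarrow> real) \<Rightarrow> real) \<Rightarrow>
    (nat \<Rightarrow> nat \<Rightarrow> nat \<Rightarrow> real) \<Rightarrow> (nat \<Rightarrow> real) \<Rightarrow> real \<Rightarrow> real \<Rightarrow> real \<Rightarrow> real \<Rightarrow>
    (nat \<Rightarrow> nat \<Rightarrow> nat \<Rightarrow> real) \<Rightarrow> (nat \<Rightarrow> nat \<Rightarrow> real) \<Rightarrow> (nat \<Rightarrow> nat \<Rightarrow> real) \<Rightarrow> nat \<Rightarrow> real" where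
  "Phi_seq T m n f A b rho theta taux tauz x z lam k =
     (if k = 0 then Phi0 T m n f A b rho theta tauz (x 0) (z 0) (lam 0)
      else Phi T m n f A b rho theta taux tauz (x k) (z k) (lam k) (x (k - 1)) (z (k - 1)))"

text \<open>hat Phi = min_{x \<in> X} sum_t f_t(x_t) (attained by (A1),(A2); written as Inf).\<close>
definition Phi_hat :: "nat \<Rightarrow> (nat \<Rightarrow> (nat \<Rightarrow> real) set) \<Rightarrow> (nat \<Rightarrow> (nat \<Rightarrow> real) \<Rightarrow> real) \<Rightarrow> real" where
  "Phi_hat T X f = Inf {(\<Sum>t\<in>{1..T}. f t (y t)) | y. \<forall>t\<in>{1..T}. y t \<in> X t}"

definition subobj :: "nat \<Rightarrow> nat \<Rightarrow> (nat \<Rightarrow> nat) \<Rightarrow> (nat \<Rightarrow> (nat \<Rightarrow> real) \<Rightarrow> real) \<Rightarrow>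
    (nat \<Rightarrow> nat \<Rightarrow> nat \<Rightarrow> real) \<Rightarrow> (nat \<Rightarrow> real) \<Rightarrow> real \<Rightarrow> real \<Rightarrow>
    (nat \<Rightarrow> nat \<Rightarrow> real) \<Rightarrow> (nat \<Rightarrow> real) \<Rightarrow> (nat \<Rightarrow> real) \<Rightarrow> nat \<Rightarrow> (nat \<Rightarrow> real) \<Rightarrow> real" where
  "subobj T m n f A b rho taux xp zp lp t y =
     f t y + inr m lp (mv (n t) (A t) y)
     + rho / 2 * sqn m (\<lambda>i. mv (n t) (A t) y i + Ax_ne T n A t xp i + zp i - b i)
     + taux / 2 * sqn m (mv (n t) (A t) (\<lambda>j. y j - xp t j))"

end

theory Submission
  imports Defs
begin

lemma sq_diff_le: fixes a b :: real shows "(a - b)^2 \<le> 2*a^2 + 2*b^2"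
proof -
  have "2*a^2 + 2*b^2 - (a-b)^2 = (a+b)^2" by (simp add: power2_eq_square algebra_simps)
  thus ?thesis by (smt (verit) zero_le_power2)
qed

lemma zpart:
  fixes th rho tz zp e v zk lp :: real
  assumes p: "rho > 0" "th > 0" "tz > 0" and ez: "tz / 4 - 2 * (th + tz)^2 / rho > 0"
    and hl: "lp = - th * zp - tz * e"
    and hz: "(tz + rho + th) * zk = tz * zp - rho * (v - zp) - lp"
  shows "th/2 * zk^2 + (lp + rho * (v - zp + zk)) * (v - zp + zk) + rho/2 * (v - zp + zk)^2
      + tz/4 * (zk - zp)^2 - th/2 * zp^2 - lp * v - rho/2 * v^2 - tz/4 * e^2 \<le> 0"
proof -
  define dl where "dl = zk - zp"
  define r where "r = v + dl"
  have rr: "rho * r = tz * e - (th + tz) * dl" using hl hz unfolding r_def dl_def by (simp add: algebra_simps)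
  have zk: "zk = zp + dl" and v: "v = r - dl" by (simp_all add: dl_def r_def)
  have eq: "th/2 * zk^2 + (lp + rho * (v - zp + zk)) * (v - zp + zk) + rho/2 * (v - zp + zk)^2
      + tz/4 * (zk - zp)^2 - th/2 * zp^2 - lp * v - rho/2 * v^2 - tz/4 * e^2
      = - (th + rho + 2*tz)/2 * dl^2 + rho * r^2 + tz/4 * dl^2 - tz/4 * e^2"
  proof -
    have "(th/2 * zk^2 + (lp + rho * (v - zp + zk)) * (v - zp + zk) + rho/2 * (v - zp + zk)^2
      + tz/4 * (zk - zp)^2 - th/2 * zp^2 - lp * v - rho/2 * v^2 - tz/4 * e^2)
      - (- (th + rho + 2*tz)/2 * dl^2 + rho * r^2 + tz/4 * dl^2 - tz/4 * e^2)
      = dl * (rho * r - tz * e + (th + tz) * dl)"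
      unfolding zk v hl by (simp add: field_simps power2_eq_square)
    then show ?thesis using rr by simp
  qed
  have c1: "8 * (th + tz)^2 < tz * rho" using ez p by (simp add: field_simps)
  have c2: "tz^2 \<le> (th+tz)^2" using p by (simp add: power_mono)
  have "rho * (rho * r^2) = (rho * r)^2" by (simp add: power2_eq_square)
  also have "\<dots> = (tz * e - (th + tz) * dl)^2" using rr by simp
  also have "\<dots> \<le> 2 * (tz^2 * e^2) + 2 * ((th+tz)^2 * dl^2)"
    using sq_diff_le[of "tz*e" "(th+tz)*dl"] by (simp add: power_mult_distrib)
  also have "\<dots> \<le> rho * (tz/4 * e^2 + tz/4 * dl^2)"
  proof -
    have "8 * tz^2 \<le> tz * rho" using c1 c2 by linarith
    hence a: "2 * (tz^2 * e^2) \<le> rho * (tz/4 * e^2)"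
      using mult_right_mono[of "8 * tz^2" "tz * rho" "e^2"] by (simp add: algebra_simps)
    have b: "2 * ((th+tz)^2 * dl^2) \<le> rho * (tz/4 * dl^2)"
      using mult_right_mono[of "8 * (th+tz)^2" "tz * rho" "dl^2"] c1 by (simp add: algebra_simps)
    show ?thesis using a b by (simp add: distrib_left)
  qed
  finally have "rho * r^2 \<le> tz/4 * e^2 + tz/4 * dl^2" using p by (simp add: mult_le_cancel_left_pos)
  moreover have "dl^2 \<ge> 0" by simp
  moreover have "- (th + rho + 2*tz)/2 * dl^2 = - tz * dl^2 - (th + rho)/2 * dl^2"
    by (simp add: field_simps)
  moreover have "(th + rho)/2 * dl^2 \<ge> 0" using p by simp
  moreover have "tz * dl^2 \<ge> 0" using p by simp
  ultimately show ?thesis unfolding eq by linarith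
qed

lemma xpart:
  fixes rho tx Tr w D Sd2 SG lp :: real
  assumes ex: "tx / 4 - (Tr - 1) * rho / 2 > 0" and p: "rho > 0"
    and hSG: "SG = lp*D + rho*w*D + (rho/2+tx/2)*Sd2"
    and hD: "D^2 \<le> Tr * Sd2" and hS: "Sd2 \<ge> 0"
  shows "lp*(w+D) + rho/2*(w+D)^2 - lp*w - rho/2*w^2 - SG + tx/4*Sd2 \<le> 0"
proof -
  have "lp*(w+D) + rho/2*(w+D)^2 - lp*w - rho/2*w^2 - SG + tx/4*Sd2
      = rho/2 * D^2 - (rho/2 + tx/4) * Sd2" unfolding hSG by (simp add: power2_eq_square field_simps)
  also have "\<dots> \<le> rho/2 * (Tr * Sd2) - (rho/2 + tx/4) * Sd2"
    using hD p by simp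
  also have "\<dots> = ((Tr - 1) * rho / 2 - tx/4) * Sd2" by (simp add: field_simps)
  also have "\<dots> \<le> 0" using ex hS by (simp add: mult_nonpos_nonneg)
  finally show ?thesis .
qed


lemma perI:
  fixes th rho tz tx Tr zp e w D Sd2 SG lp zk lk :: real
  assumes p: "rho > 0" "th > 0" "tz > 0" and ez: "tz / 4 - 2 * (th + tz)^2 / rho > 0"
    and ex: "tx / 4 - (Tr - 1) * rho / 2 > 0"
    and hl: "lp = - th * zp - tz * e"
    and hz: "(tz + rho + th) * zk = tz * zp - rho * (w + D - zp) - lp"
    and hlk: "lk = lp + rho * (w + D - zp + zk)"
    and hSG: "SG = lp*D + rho*w*D + (rho/2+tx/2)*Sd2"
    and hD: "D^2 \<le> Tr * Sd2" and hS: "Sd2 \<ge> 0"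
  shows "th/2*zk^2 + lk*(w + D - zp + zk) + rho/2*(w+D-zp+zk)^2 + tz/4*(zk-zp)^2
     - (th/2*zp^2 + lp*w + rho/2*w^2 + tz/4*e^2) + tx/4*Sd2 - SG \<le> 0"
proof -
  have z: "th/2 * zk^2 + (lp + rho * ((w+D) - zp + zk)) * ((w+D) - zp + zk) + rho/2 * ((w+D) - zp + zk)^2
      + tz/4 * (zk - zp)^2 - th/2 * zp^2 - lp * (w+D) - rho/2 * (w+D)^2 - tz/4 * e^2 \<le> 0"
    by (rule zpart[OF p ez hl]) (use hz in simp)
  have x: "lp*(w+D) + rho/2*(w+D)^2 - lp*w - rho/2*w^2 - SG + tx/4*Sd2 \<le> 0"
    by (rule xpart[OF ex p(1) hSG hD hS])
  have eq: "th/2*zk^2 + lk*(w + D - zp + zk) + rho/2*(w+D-zp+zk)^2 + tz/4*(zk-zp)^2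
     - (th/2*zp^2 + lp*w + rho/2*w^2 + tz/4*e^2) + tx/4*Sd2 - SG
     = (th/2 * zk^2 + (lp + rho * ((w+D) - zp + zk)) * ((w+D) - zp + zk) + rho/2 * ((w+D) - zp + zk)^2
      + tz/4 * (zk - zp)^2 - th/2 * zp^2 - lp * (w+D) - rho/2 * (w+D)^2 - tz/4 * e^2)
     + (lp*(w+D) + rho/2*(w+D)^2 - lp*w - rho/2*w^2 - SG + tx/4*Sd2)"
    unfolding hlk by (simp add: diff_add_eq add_diff_eq)
  show ?thesis unfolding eq using z x by linarith
qed


lemma posI:
  fixes th rho tz zk dl r :: real
  assumes p: "rho > 0" "th > 0" "tz > 0" and ez: "tz / 4 - 2 * (th + tz)^2 / rho > 0"
  shows "th/2*zk^2 + (- th * zk - tz * dl) * r + rho/2*r^2 + tz/4*dl^2 \<ge> 0"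
proof -
  have c1: "8 * (th + tz)^2 < tz * rho" using ez p by (simp add: field_simps)
  have "tz * (th + tz) \<le> (th+tz)^2" using p by (simp add: power2_eq_square)
  hence "8 * (tz * (th+tz)) < tz * rho" using c1 by linarith
  hence "8 * (th+tz) < rho" using p by (simp add: mult.commute mult.left_commute)
  hence "8*th + 8*tz < rho" by (simp add: algebra_simps)
  hence "rho - th - 2*tz \<ge> 0" using p by linarith
  hence rr: "rho/2 - th/2 - tz \<ge> 0" by (simp add: field_simps)
  have "th/2*zk^2 + (- th * zk - tz * dl) * r + rho/2*r^2 + tz/4*dl^2
      = th/2*(zk - r)^2 + tz*(r - dl/2)^2 + (rho/2 - th/2 - tz) * r^2" by (simp add: power2_eq_square field_simps)
  also have "\<dots> \<ge> 0" using p rr by (simp add: add_nonneg_nonneg)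
  finally show ?thesis .
qed


lemma Phi_exp:
  "Phi T m n f A b rho theta taux tauz xx zz ll xh zh = (\<Sum>t\<in>{1..T}. f t (xx t))
    + (\<Sum>i<m. theta/2 * (zz i)^2 + ll i * (Ax T n A xx i + zz i - b i)
        + rho/2 * (Ax T n A xx i + zz i - b i)^2 + tauz/4 * (zz i - zh i)^2)
    + (\<Sum>t\<in>{1..T}. taux/4 * sqn m (mv (n t) (A t) (\<lambda>j. xx t j - xh t j)))"
  unfolding Phi_def AL_def Let_def sqn_def inr_def by (simp add: sum.distrib sum_distrib_left)


lemma Phi0_exp:
  "Phi0 T m n f A b rho theta tauz xx zz ll = (\<Sum>t\<in>{1..T}. f t (xx t))
    + (\<Sum>i<m. theta/2 * (zz i)^2 + ll i * (Ax T n A xx i + zz i - b i)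
        + rho/2 * (Ax T n A xx i + zz i - b i)^2 + tauz/4 * (- (ll i + theta * zz i) / tauz)^2)"
  unfolding Phi0_def AL_def Let_def sqn_def inr_def by (simp add: sum.distrib sum_distrib_left)



theorem lemma3:
  fixes T m :: nat and n :: "nat \<Rightarrow> nat"
    and X :: "nat \<Rightarrow> (nat \<Rightarrow> real) set"
    and f :: "nat \<Rightarrow> (nat \<Rightarrow> real) \<Rightarrow> real"
    and A :: "nat \<Rightarrow> nat \<Rightarrow> nat \<Rightarrow> real"
    and b :: "nat \<Rightarrow> real"
    and rho theta taux tauz :: real
    and x :: "nat \<Rightarrow> nat \<Rightarrow> nat \<Rightarrow> real"
    and z lam :: "nat \<Rightarrow> nat \<Rightarrow> real"
    and k :: nat
  assumes T_pos: "1 \<le> T"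
    and A1: "\<forall>t\<in>{1..T}. X t \<subseteq> Rn (n t) \<and> X t \<noteq> {} \<and> compact (X t)"
    and A2: "\<forall>t\<in>{1..T}. C2 (n t) (f t)"
    and A3: "full_row_rank T m n A"
    and A4: "\<exists>y. (\<forall>t\<in>{1..T}. y t \<in> X t) \<and> (\<forall>i<m. Ax T n A y i = b i)"
    and params: "rho > 0" "theta > 0" "taux > 0" "tauz > 0"
    and eta_x: "taux / 4 - (real T - 1) * rho / 2 > 0"
    and eta_z: "tauz / 4 - 2 * (theta + tauz)^2 / rho > 0"
    and x0: "\<forall>t\<in>{1..T}. x 0 t \<in> X t"
    and x_step: "\<forall>j\<ge>1. \<forall>t\<in>{1..T}.
        local_min_on (n t) (X t) (subobj T m n f A b rho taux (x (j - 1)) (z (j - 1)) (lam (j - 1)) t) (x j t)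
        \<and> subobj T m n f A b rho taux (x (j - 1)) (z (j - 1)) (lam (j - 1)) t (x j t)
          \<le> subobj T m n f A b rho taux (x (j - 1)) (z (j - 1)) (lam (j - 1)) t (x (j - 1) t)"
    and z_step: "\<forall>j\<ge>1. \<forall>i<m. z j i =
        (tauz * z (j - 1) i - rho * (Ax T n A (x j) i - b i) - lam (j - 1) i) / (tauz + rho + theta)"
    and lam_step: "\<forall>j\<ge>1. \<forall>i<m. lam j i = lam (j - 1) i + rho * (Ax T n A (x j) i + z j i - b i)"
    and k_pos: "1 \<le> k"
  shows "Phi_seq T m n f A b rho theta taux tauz x z lam (k - 1) \<ge> Phi_seq T m n f A b rho theta taux tauz x z lam k
       \<and> Phi_seq T m n f A b rho theta taux tauz x z lam k \<ge> Phi_hat T X f"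
proof -
  define p where "p = k - 1"
  have kp: "k = Suc p" using k_pos unfolding p_def by simp
  have k1: "k - 1 = p" unfolding p_def by simp
  define c where "c = tauz + rho + theta"
  have cpos: "c > 0" using params unfolding c_def by simp
  define a where "a = (\<lambda>t i. mv (n t) (A t) (x p t) i)"
  define d where "d = (\<lambda>t i. mv (n t) (A t) (\<lambda>j. x k t j - x p t j) i)"
  define D where "D = (\<lambda>i. \<Sum>t\<in>{1..T}. d t i)"
  define Sd2 where "Sd2 = (\<lambda>i. \<Sum>t\<in>{1..T}. (d t i)^2)"
  define w where "w = (\<lambda>i. Ax T n A (x p) i + z p i - b i)"
  have mv_lin: "mv (n t) (A t) (x k t) i = a t i + d t i" for t i
    unfolding a_def d_def mv_def by (simp add: right_diff_distrib sum_subtractf)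
  have Ax_k: "Ax T n A (x k) i = Ax T n A (x p) i + D i" for i
    unfolding Ax_def D_def by (simp add: mv_lin sum.distrib a_def)
  have Ax_ne: "Ax_ne T n A t (x p) i = Ax T n A (x p) i - a t i" if "t \<in> {1..T}" for t i
    unfolding Ax_ne_def Ax_def a_def using that by (simp add: sum_diff1)
  have lam_rel: "lam j i = - theta * z j i - tauz * (z j i - z (j - 1) i)" if "j \<ge> 1" "i < m" for j i
  proof -
    have "z j i = (tauz * z (j - 1) i - rho * (Ax T n A (x j) i - b i) - lam (j - 1) i) / c"
      using z_step[rule_format, OF that] unfolding c_def .
    hence "c * z j i = tauz * z (j - 1) i - rho * (Ax T n A (x j) i - b i) - lam (j - 1) i"
      using cpos by (simp add: field_simps)
    moreover have "lam j i = lam (j - 1) i + rho * (Ax T n A (x j) i + z j i - b i)"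
      using lam_step[rule_format, OF that] .
    ultimately show ?thesis unfolding c_def by (simp add: algebra_simps)
  qed
  define G where "G = (\<lambda>t i. lam p i * d t i + rho * w i * d t i + (rho/2 + taux/2) * (d t i)^2)"
  have sub_k: "subobj T m n f A b rho taux (x p) (z p) (lam p) t (x k t) =
      f t (x k t) + (\<Sum>i<m. lam p i * (a t i + d t i)) + rho/2 * (\<Sum>i<m. (w i + d t i)^2)
      + taux/2 * (\<Sum>i<m. (d t i)^2)" if "t \<in> {1..T}" for t
    unfolding subobj_def inr_def sqn_def using that
    by (simp add: mv_lin Ax_ne w_def d_def algebra_simps)
  have sub_p: "subobj T m n f A b rho taux (x p) (z p) (lam p) t (x p t) =
      f t (x p t) + (\<Sum>i<m. lam p i * a t i) + rho/2 * (\<Sum>i<m. (w i)^2)" if "t \<in> {1..T}" for t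
    unfolding subobj_def inr_def sqn_def using that
    by (simp add: Ax_ne w_def a_def mv_def algebra_simps)
  have desc_t: "f t (x k t) - f t (x p t) + (\<Sum>i<m. G t i) \<le> 0" if t: "t \<in> {1..T}" for t
  proof -
    have le: "subobj T m n f A b rho taux (x p) (z p) (lam p) t (x k t)
        \<le> subobj T m n f A b rho taux (x p) (z p) (lam p) t (x p t)"
      using conjunct2[OF x_step[rule_format, OF k_pos t]] unfolding k1 .
    have "(\<Sum>i<m. lam p i * (a t i + d t i)) + rho/2 * (\<Sum>i<m. (w i + d t i)^2)
      + taux/2 * (\<Sum>i<m. (d t i)^2) - (\<Sum>i<m. lam p i * a t i) - rho/2 * (\<Sum>i<m. (w i)^2)
      = (\<Sum>i<m. lam p i * (a t i + d t i) + rho/2 * (w i + d t i)^2 + taux/2 * (d t i)^2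
          - lam p i * a t i - rho/2 * (w i)^2)"
      by (simp add: sum.distrib sum_subtractf sum_distrib_left)
    also have "\<dots> = (\<Sum>i<m. G t i)"
      by (rule sum.cong) (simp_all add: G_def power2_eq_square algebra_simps)
    finally show ?thesis using le sub_k[OF t] sub_p[OF t] by linarith
  qed
  have desc: "(\<Sum>t\<in>{1..T}. f t (x k t)) - (\<Sum>t\<in>{1..T}. f t (x p t)) + (\<Sum>i<m. \<Sum>t\<in>{1..T}. G t i) \<le> 0"
  proof -
    have "(\<Sum>t\<in>{1..T}. f t (x k t) - f t (x p t) + (\<Sum>i<m. G t i)) \<le> 0"
      by (rule sum_nonpos) (use desc_t in auto)
    moreover have "(\<Sum>t\<in>{1..T}. f t (x k t) - f t (x p t) + (\<Sum>i<m. G t i))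
       = (\<Sum>t\<in>{1..T}. f t (x k t)) - (\<Sum>t\<in>{1..T}. f t (x p t)) + (\<Sum>t\<in>{1..T}. \<Sum>i<m. G t i)"
      by (simp add: sum.distrib sum_subtractf)
    moreover have "(\<Sum>t\<in>{1..T}. \<Sum>i<m. G t i) = (\<Sum>i<m. \<Sum>t\<in>{1..T}. G t i)"
      by (rule sum.swap)
    ultimately show ?thesis by linarith
  qed
  have SG: "(\<Sum>t\<in>{1..T}. G t i) = lam p i * D i + rho * w i * D i + (rho/2 + taux/2) * Sd2 i" for i
    unfolding G_def D_def Sd2_def by (simp add: sum.distrib sum_distrib_left)
  have CS: "(D i)^2 \<le> real T * Sd2 i" for i
    using sum_squared_le_sum_of_squares[of "\<lambda>t. d t i" "{1..T}"] unfolding D_def Sd2_def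
    by (simp add: mult.commute)
  have Sd2_nn: "Sd2 i \<ge> 0" for i unfolding Sd2_def by (simp add: sum_nonneg)
  have xterm: "(\<Sum>t\<in>{1..T}. taux/4 * sqn m (mv (n t) (A t) (\<lambda>j. x k t j - x p t j)))
      = (\<Sum>i<m. taux/4 * Sd2 i)"
  proof -
    have "(\<Sum>t\<in>{1..T}. taux/4 * sqn m (mv (n t) (A t) (\<lambda>j. x k t j - x p t j)))
       = (\<Sum>t\<in>{1..T}. \<Sum>i<m. taux/4 * (d t i)^2)"
      unfolding sqn_def d_def by (simp add: sum_distrib_left)
    also have "\<dots> = (\<Sum>i<m. \<Sum>t\<in>{1..T}. taux/4 * (d t i)^2)" by (rule sum.swap)
    also have "\<dots> = (\<Sum>i<m. taux/4 * Sd2 i)" unfolding Sd2_def by (simp add: sum_distrib_left)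
    finally show ?thesis .
  qed
  define Pk where "Pk = (\<lambda>i. theta/2 * (z k i)^2 + lam k i * (Ax T n A (x k) i + z k i - b i)
        + rho/2 * (Ax T n A (x k) i + z k i - b i)^2 + tauz/4 * (z k i - z p i)^2)"
  have Phik: "Phi_seq T m n f A b rho theta taux tauz x z lam k
      = (\<Sum>t\<in>{1..T}. f t (x k t)) + (\<Sum>i<m. Pk i) + (\<Sum>i<m. taux/4 * Sd2 i)"
  proof -
    have "Phi_seq T m n f A b rho theta taux tauz x z lam k
       = Phi T m n f A b rho theta taux tauz (x k) (z k) (lam k) (x p) (z p)"
      using k_pos unfolding Phi_seq_def k1 by simp
    also have "\<dots> = (\<Sum>t\<in>{1..T}. f t (x k t)) + (\<Sum>i<m. Pk i)
       + (\<Sum>t\<in>{1..T}. taux/4 * sqn m (mv (n t) (A t) (\<lambda>j. x k t j - x p t j)))"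
      unfolding Phi_exp Pk_def by simp
    finally show ?thesis unfolding xterm .
  qed
  obtain e Xp where ePhi: "Phi_seq T m n f A b rho theta taux tauz x z lam p
      = (\<Sum>t\<in>{1..T}. f t (x p t)) + (\<Sum>i<m. theta/2 * (z p i)^2 + lam p i * w i
        + rho/2 * (w i)^2 + tauz/4 * (e i)^2) + Xp"
    and Xp: "Xp \<ge> 0" and erel: "\<forall>i<m. lam p i = - theta * z p i - tauz * e i"
  proof (cases "p = 0")
    case True
    show ?thesis
      by (rule that[of "\<lambda>i. - (lam p i + theta * z p i) / tauz" 0]) (use True params in \<open>simp_all add: Phi_seq_def Phi0_exp w_def field_simps\<close>)
  next
    case False
    have X: "(\<Sum>t\<in>{1..T}. taux/4 * sqn m (mv (n t) (A t) (\<lambda>j. x p t j - x (p-1) t j))) \<ge> 0"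
      using params by (simp add: sum_nonneg sqn_def)
    show ?thesis
      by (rule that[of "\<lambda>i. z p i - z (p - 1) i", OF _ X]) (use False lam_rel[of p] in \<open>simp_all add: Phi_seq_def Phi_exp w_def\<close>)
  qed
  have perIi: "Pk i - (theta/2 * (z p i)^2 + lam p i * w i + rho/2 * (w i)^2 + tauz/4 * (e i)^2)
      + taux/4 * Sd2 i - (\<Sum>t\<in>{1..T}. G t i) \<le> 0" if i: "i < m" for i
  proof -
    have r: "Ax T n A (x k) i + z k i - b i = w i + D i - z p i + z k i"
      unfolding Ax_k w_def by simp
    have zk: "z k i = (tauz * z p i - rho * (Ax T n A (x k) i - b i) - lam p i) / c"
      using z_step[rule_format, OF k_pos i] unfolding c_def k1 .
    have hz: "(tauz + rho + theta) * z k i = tauz * z p i - rho * (w i + D i - z p i) - lam p i"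
    proof -
      have ax: "Ax T n A (x k) i - b i = w i + D i - z p i" using r by linarith
      have "c * z k i = tauz * z p i - rho * (Ax T n A (x k) i - b i) - lam p i"
        using zk cpos by (simp add: field_simps)
      then show ?thesis unfolding ax c_def .
    qed
    have hlk: "lam k i = lam p i + rho * (w i + D i - z p i + z k i)"
      using lam_step[rule_format, OF k_pos i] r unfolding k1 by simp
    have eta_x': "taux / 4 - (real T - 1) * rho / 2 > 0" by (rule eta_x)
    show ?thesis
      using perI[OF params(1,2,4) eta_z eta_x' erel[rule_format, OF i] hz hlk SG[of i] CS[of i] Sd2_nn[of i]]
      unfolding Pk_def r by simp
  qed
  have tot: "(\<Sum>i<m. Pk i) - (\<Sum>i<m. theta/2 * (z p i)^2 + lam p i * w i + rho/2 * (w i)^2 + tauz/4 * (e i)^2)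
      + (\<Sum>i<m. taux/4 * Sd2 i) - (\<Sum>i<m. \<Sum>t\<in>{1..T}. G t i) \<le> 0"
  proof -
    have "(\<Sum>i<m. Pk i - (theta/2 * (z p i)^2 + lam p i * w i + rho/2 * (w i)^2 + tauz/4 * (e i)^2)
      + taux/4 * Sd2 i - (\<Sum>t\<in>{1..T}. G t i)) \<le> 0"
      by (rule sum_nonpos) (use perIi in auto)
    thus ?thesis by (simp add: sum.distrib sum_subtractf)
  qed
  have part1: "Phi_seq T m n f A b rho theta taux tauz x z lam (k - 1) \<ge> Phi_seq T m n f A b rho theta taux tauz x z lam k"
    unfolding k1 Phik ePhi using tot desc Xp by linarith
  have Pk_nn: "Pk i \<ge> 0" if i: "i < m" for i
    using posI[OF params(1,2,4) eta_z, of "z k i" "z k i - z p i" "Ax T n A (x k) i + z k i - b i"]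
      lam_rel[of k i] k_pos i unfolding Pk_def k1 by simp
  have ge_F: "Phi_seq T m n f A b rho theta taux tauz x z lam k \<ge> (\<Sum>t\<in>{1..T}. f t (x k t))"
  proof -
    have "(\<Sum>i<m. Pk i) \<ge> 0" by (rule sum_nonneg) (use Pk_nn in auto)
    moreover have "(\<Sum>i<m. taux/4 * Sd2 i) \<ge> 0" using Sd2_nn params by (simp add: sum_nonneg)
    ultimately show ?thesis unfolding Phik by linarith
  qed
  have memb: "x k t \<in> X t" if "t \<in> {1..T}" for t
    using conjunct1[OF x_step[rule_format, OF k_pos that]] unfolding local_min_on_def by (rule conjunct1)
  have lb: "\<forall>t\<in>{1..T}. \<exists>B. \<forall>v\<in>X t. B \<le> f t v"
  proof
    fix t assume t: "t \<in> {1..T}"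
    have cont: "continuous_on (X t) (f t)"
      using A2 A1 t unfolding C2_def by (meson continuous_on_subset)
    have "compact (f t ` X t)" using compact_continuous_image[OF cont] A1 t by blast
    then obtain B where "\<forall>y\<in>f t ` X t. \<bar>y\<bar> \<le> B"
      using compact_imp_bounded bounded_real by metis
    hence "\<forall>v\<in>X t. - B \<le> f t v" by force
    thus "\<exists>B. \<forall>v\<in>X t. B \<le> f t v" by blast
  qed
  then obtain B where B: "\<forall>t\<in>{1..T}. \<forall>v\<in>X t. B t \<le> f t v" by metis
  have bdd: "bdd_below {(\<Sum>t\<in>{1..T}. f t (y t)) | y. \<forall>t\<in>{1..T}. y t \<in> X t}"
  proof (rule bdd_belowI[of _ "\<Sum>t\<in>{1..T}. B t"])
    fix s assume "s \<in> {(\<Sum>t\<in>{1..T}. f t (y t)) | y. \<forall>t\<in>{1..T}. y t \<in> X t}"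
    then obtain y where s: "s = (\<Sum>t\<in>{1..T}. f t (y t))" and y: "\<forall>t\<in>{1..T}. y t \<in> X t" by blast
    show "(\<Sum>t\<in>{1..T}. B t) \<le> s" unfolding s by (rule sum_mono) (use B y in blast)
  qed
  have "Phi_hat T X f \<le> (\<Sum>t\<in>{1..T}. f t (x k t))"
    unfolding Phi_hat_def by (rule cInf_lower[OF _ bdd]) (use memb in blast)
  with ge_F part1 show ?thesis by linarith
qed

end
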